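(* For all real $\alpha,\beta,\alpha',\beta'$ with $\beta\neq0$ and $\beta'\neq0$, every integer $n\ge0$ and every real $x$, \[ P_n^{(\alpha,\beta)}(x)=\sum_{j=0}^{n}(-1)^jS_{\alpha-\frac{\alpha'}{\beta'}\beta,\ \frac{\beta}{\beta'}}(n,j)\,P_j^{(\alpha',\beta')}(x). \] In particular, taking $(\alpha',\beta')=(-\alpha,-\beta)$, \[ P_n^{(\alpha,\beta)}(x)=\sum_{j=0}^{n}(-1)^jL(n,j)\,P_j^{(-\alpha,-\beta)}(x), \] where $L(n,j)$ are the (unsigned) Lah numbers: $L(0,0)=1$, $L(n,0)=0$ for $n\ge1$, and $L(n,j)=\binom{n-1}{j-1}\frac{n!}{j!}$ for $1\le j\le n$.
   Context: For real $a$ and integer $n\ge 1$, $\langle a\rangle_n:=a(a+1)\cdots(a+n-1)$ and $\langle a\rangle_0:=1$. For real $\alpha,\beta$ and integers $0\le k\le n$, $S_{\alpha,\beta}(n,k):=\frac{1}{k!}\sum_{j=0}^{k}(-1)^{k-j}\binom{k}{j}\langle-\alpha-\beta j\rangle_n$. For real $\alpha,\beta$ with $\beta\neq0$, the polynomials $P_n^{(\alpha,\beta)}(x)$ are defined by $\sum_{n\ge0}P_n^{(\alpha,\beta)}(x)\frac{t^n}{n!}=(1-t)^{\alpha}\exp\big(x((1-t)^{\beta}-1)\big)$ (formal power series in $t$). *)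

theory Defs
  imports "HOL-Computational_Algebra.Formal_Power_Series"
begin

definition genS :: "real \<Rightarrow> real \<Rightarrow> nat \<Rightarrow> nat \<Rightarrow> real" where
  "genS a b n k = (1 / fact k) *
     (\<Sum>j = 0..k. (-1) ^ (k - j) * real (k choose j) * pochhammer (- a - b * real j) n)"

definition one_minus_pow :: "real \<Rightarrow> real fps" where
  "one_minus_pow a = fps_binomial a oo (- fps_X)"

definition Pgen :: "real \<Rightarrow> real \<Rightarrow> real \<Rightarrow> real fps" where
  "Pgen a b x = one_minus_pow a * (fps_exp x oo (one_minus_pow b - 1))"

definition Ppoly :: "nat \<Rightarrow> real \<Rightarrow> real \<Rightarrow> real \<Rightarrow> real" where
  "Ppoly n a b x = fact n * fps_nth (Pgen a b x) n"

definition Lah :: "nat \<Rightarrow> nat \<Rightarrow> real" where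
  "Lah n j = (if n = 0 \<and> j = 0 then 1
              else if 1 \<le> j \<and> j \<le> n then real ((n - 1) choose (j - 1)) * fact n / fact j
              else 0)"

end

theory Submission
  imports Defs
begin

lemma bin_deriv: "fps_deriv (fps_binomial c) = fps_const c * fps_binomial (c - 1 :: real)"
proof -
  have "fps_deriv (fps_binomial c) = fps_const c * fps_binomial c * inverse (1 + fps_X)"
    by (simp add: fps_binomial_deriv fps_divide_unit)
  also have "\<dots> = fps_const c * (fps_binomial c * fps_binomial (-1))"
    by (simp add: fps_binomial_minus_one mult.assoc)
  also have "\<dots> = fps_const c * fps_binomial (c - 1)"
    using fps_binomial_add_mult[of c "-1"] by simp
  finally show ?thesis .
qed

lemma bin_comp: "fps_binomial p oo (fps_binomial d - 1) = fps_binomial (p*d :: real)"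
proof -
  let ?h = "fps_binomial d - 1"
  let ?G = "fps_binomial p oo ?h"
  have h0: "fps_nth ?h 0 = 0" by simp
  have hB: "(fps_binomial 1 oo ?h) = fps_binomial d"
    by (simp add: fps_binomial_1 fps_compose_add_distrib h0)
  have GG: "(fps_binomial (p-1) oo ?h) * fps_binomial d = ?G"
    using fps_compose_mult_distrib[OF h0, of "fps_binomial (p-1)" "fps_binomial 1"]
    by (simp add: hB fps_binomial_add_mult[symmetric])
  have d1: "fps_binomial (d - 1) * (1 + fps_X) = fps_binomial d"
    by (simp add: fps_binomial_1[symmetric] fps_binomial_add_mult[symmetric])
  have "fps_deriv ?G = (fps_const p * fps_binomial (p - 1) oo ?h) * (fps_const d * fps_binomial (d - 1))"
    by (simp add: fps_compose_deriv[OF h0] bin_deriv)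
  also have "\<dots> = fps_const p * fps_const d * (fps_binomial (p - 1) oo ?h) * fps_binomial (d - 1)"
    by (simp add: fps_compose_mult_distrib[OF h0] fps_const_compose)
  finally have "fps_deriv ?G * (1 + fps_X) = fps_const p * fps_const d * ((fps_binomial (p - 1) oo ?h) * (fps_binomial (d - 1) * (1 + fps_X)))"
    by (simp add: mult.assoc)
  also have "\<dots> = fps_const (p * d) * ?G"
    by (simp add: d1 GG)
  finally have e: "fps_deriv ?G * (1 + fps_X) = fps_const (p * d) * ?G" .
  have nz: "(1 + fps_X :: real fps) \<noteq> 0"
  proof
    assume "(1 + fps_X :: real fps) = 0"
    hence "fps_nth (1 + fps_X :: real fps) 0 = 0" by simp
    thus False by simp
  qed
  have "fps_deriv ?G = fps_const (p * d) * ?G / (1 + fps_X)"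
    using nz by (simp add: e[symmetric])
  moreover have "fps_nth ?G 0 = 1" by simp
  ultimately show ?thesis using fps_binomial_ODE_unique'[of ?G "p*d"] by simp
qed

lemma mX0: "fps_nth (- fps_X :: real fps) 0 = 0" by simp

lemma omp_nth: "fps_nth (one_minus_pow e) n = pochhammer (- e) n / fact n"
  by (simp add: one_minus_pow_def fps_compose_uminus' gbinomial_pochhammer)

lemma omp_0_nth: "fps_nth (one_minus_pow e) 0 = 1"
  by (simp add: omp_nth)

lemma omp_zero: "one_minus_pow 0 = 1"
  by (simp add: one_minus_pow_def)

lemma omp_add: "one_minus_pow (a + b) = one_minus_pow a * one_minus_pow b"
  by (simp add: one_minus_pow_def fps_binomial_add_mult fps_compose_mult_distrib[OF mX0])

lemma omp_power: "one_minus_pow e ^ k = one_minus_pow (real k * e)"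
  by (induction k) (simp_all add: omp_zero omp_add[symmetric] algebra_simps)

lemma omp_comp: "one_minus_pow p oo (1 - one_minus_pow d) = one_minus_pow (p * d)"
proof -
  let ?s = "1 - one_minus_pow d"
  have s0: "fps_nth ?s 0 = 0" by (simp add: omp_0_nth)
  have h0: "fps_nth (fps_binomial d - 1) 0 = 0" by simp
  have "- fps_X oo ?s = (fps_binomial d - 1) oo (- fps_X)"
    by (simp add: fps_compose_uminus fps_X_fps_compose_startby0[OF s0] fps_compose_sub_distrib one_minus_pow_def)
  moreover have "one_minus_pow p oo ?s = fps_binomial p oo (- fps_X oo ?s)"
    unfolding one_minus_pow_def[of p] by (rule fps_compose_assoc[OF s0 mX0, symmetric])
  ultimately have "one_minus_pow p oo ?s = fps_binomial p oo ((fps_binomial d - 1) oo (- fps_X))"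
    by simp
  also have "\<dots> = (fps_binomial p oo (fps_binomial d - 1)) oo (- fps_X)"
    by (simp add: fps_compose_assoc[OF mX0 h0])
  finally show ?thesis by (simp add: bin_comp one_minus_pow_def)
qed

lemma Pgen_comp:
  assumes "b' \<noteq> 0"
  shows "Pgen a b x = one_minus_pow (a - (a' / b') * b) * (Pgen a' b' x oo (1 - one_minus_pow (b / b')))"
proof -
  let ?s = "1 - one_minus_pow (b / b')"
  have s0: "fps_nth ?s 0 = 0" by (simp add: omp_0_nth)
  have q0: "fps_nth (one_minus_pow b' - 1) 0 = 0" by (simp add: omp_0_nth)
  have "(one_minus_pow b' - 1) oo ?s = one_minus_pow b - 1"
    using assms by (simp add: fps_compose_sub_distrib omp_comp)
  hence "Pgen a' b' x oo ?s = one_minus_pow (a' * (b / b')) * (fps_exp x oo (one_minus_pow b - 1))"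
    unfolding Pgen_def
    by (simp add: fps_compose_mult_distrib[OF s0] omp_comp fps_compose_assoc[OF s0 q0, symmetric])
  moreover have "one_minus_pow (a - (a' / b') * b) * one_minus_pow (a' * (b / b')) = one_minus_pow a"
    using omp_add[of "a - (a' / b') * b" "a' * (b / b')", symmetric] by simp
  ultimately have "one_minus_pow (a - (a' / b') * b) * (Pgen a' b' x oo ?s)
      = one_minus_pow a * (fps_exp x oo (one_minus_pow b - 1))"
    by (metis mult.assoc)
  also have "\<dots> = Pgen a b x" by (simp add: Pgen_def)
  finally show ?thesis by simp
qed

lemma coeff_comp:
  fixes M P s :: "real fps"
  assumes s0: "fps_nth s 0 = 0"
  shows "fps_nth (M * (P oo s)) n = (\<Sum>j=0..n. fps_nth P j * fps_nth (M * s ^ j) n)"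
proof -
  have "fps_nth (M * (P oo s)) n = (\<Sum>i=0..n. fps_nth M i * (\<Sum>j=0..n-i. fps_nth P j * fps_nth (s ^ j) (n - i)))"
    by (simp add: fps_mult_nth fps_compose_nth)
  also have "\<dots> = (\<Sum>i=0..n. fps_nth M i * (\<Sum>j=0..n. fps_nth P j * fps_nth (s ^ j) (n - i)))"
  proof (rule sum.cong[OF refl])
    fix i assume "i \<in> {0..n}"
    have "(\<Sum>j=0..n-i. fps_nth P j * fps_nth (s ^ j) (n - i)) = (\<Sum>j=0..n. fps_nth P j * fps_nth (s ^ j) (n - i))"
      by (rule sum.mono_neutral_left) (auto simp: startsby_zero_power_prefix[OF s0])
    thus "fps_nth M i * (\<Sum>j=0..n-i. fps_nth P j * fps_nth (s ^ j) (n - i)) = fps_nth M i * (\<Sum>j=0..n. fps_nth P j * fps_nth (s ^ j) (n - i))"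
      by simp
  qed
  also have "\<dots> = (\<Sum>j=0..n. fps_nth P j * (\<Sum>i=0..n. fps_nth M i * fps_nth (s ^ j) (n - i)))"
    unfolding sum_distrib_left
    by (subst sum.swap) (simp add: mult_ac)
  also have "\<dots> = (\<Sum>j=0..n. fps_nth P j * fps_nth (M * s ^ j) n)"
    by (simp add: fps_mult_nth)
  finally show ?thesis .
qed

lemma expand_pow:
  "one_minus_pow c * (1 - one_minus_pow d) ^ j =
     (\<Sum>i=0..j. fps_const (real (j choose i) * (-1) ^ i) * one_minus_pow (c + real i * d))"
proof -
  have "(1 - one_minus_pow d) ^ j = (- one_minus_pow d + 1) ^ j" by simp
  also have "\<dots> = (\<Sum>i=0..j. of_nat (j choose i) * (- one_minus_pow d) ^ i * 1 ^ (j - i))"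
    using binomial_ring[of "- one_minus_pow d" 1 j] by (simp add: atMost_atLeast0)
  also have "\<dots> = (\<Sum>i=0..j. fps_const (real (j choose i) * (-1) ^ i) * one_minus_pow (real i * d))"
  proof (rule sum.cong[OF refl])
    fix i
    have "- one_minus_pow d = fps_const (-1) * one_minus_pow d" by (simp add: fps_eq_iff)
    hence "(- one_minus_pow d) ^ i = (fps_const (-1) * one_minus_pow d) ^ i" by (simp only:)
    also have "\<dots> = fps_const (-1) ^ i * one_minus_pow d ^ i" by (rule power_mult_distrib)
    also have "\<dots> = fps_const ((-1) ^ i) * one_minus_pow d ^ i" by (simp only: fps_const_power)
    finally have "(- one_minus_pow d) ^ i = fps_const ((-1) ^ i) * one_minus_pow d ^ i" .
    thus "of_nat (j choose i) * (- one_minus_pow d) ^ i * 1 ^ (j - i)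
        = fps_const (real (j choose i) * (-1) ^ i) * one_minus_pow (real i * d)"
      by (simp add: omp_power fps_of_nat[symmetric] fps_const_mult[symmetric] mult.assoc del: fps_const_mult)
  qed
  finally have e: "(1 - one_minus_pow d) ^ j = (\<Sum>i=0..j. fps_const (real (j choose i) * (-1) ^ i) * one_minus_pow (real i * d))" .
  show ?thesis unfolding e sum_distrib_left
  proof (rule sum.cong[OF refl])
    fix i
    show "one_minus_pow c * (fps_const (real (j choose i) * (- 1) ^ i) * one_minus_pow (real i * d)) =
         fps_const (real (j choose i) * (- 1) ^ i) * one_minus_pow (c + real i * d)"
      by (simp only: omp_add mult.left_commute)
  qed
qed

lemma coef_genS:
  "fact n * fps_nth (one_minus_pow c * (1 - one_minus_pow d) ^ j) n = (-1) ^ j * genS c d n j * fact j"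
proof -
  have "fact n * fps_nth (one_minus_pow c * (1 - one_minus_pow d) ^ j) n
      = (\<Sum>i=0..j. real (j choose i) * (-1) ^ i * pochhammer (- c - d * real i) n)"
    by (simp add: expand_pow fps_sum_nth omp_nth sum_distrib_left algebra_simps)
  also have "\<dots> = (-1) ^ j * (\<Sum>i=0..j. (-1) ^ (j - i) * real (j choose i) * pochhammer (- c - d * real i) n)"
    unfolding sum_distrib_left
  proof (rule sum.cong[OF refl])
    fix i assume "i \<in> {0..j}"
    hence "j = i + (j - i)" by simp
    hence "(-1::real) ^ j * (-1) ^ (j - i) = (-1) ^ i * ((-1) ^ (j - i) * (-1) ^ (j - i))"
      by (metis power_add mult.assoc)
    moreover have "(-1::real) ^ (j - i) * (-1) ^ (j - i) = ((-1) * (-1)) ^ (j - i)"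
      by (rule power_mult_distrib[symmetric])
    ultimately have "(-1::real) ^ j * (-1) ^ (j - i) = (-1) ^ i" by simp
    moreover have "(-1) ^ j * ((-1) ^ (j - i) * real (j choose i) * pochhammer (- c - d * real i) n)
       = ((-1::real) ^ j * (-1) ^ (j - i)) * real (j choose i) * pochhammer (- c - d * real i) n"
      by (simp only: mult.assoc)
    ultimately show "real (j choose i) * (-1) ^ i * pochhammer (- c - d * real i) n
        = (-1) ^ j * ((-1) ^ (j - i) * real (j choose i) * pochhammer (- c - d * real i) n)"
      by (simp only: mult.commute[of "real (j choose i)"])
  qed
  also have "\<dots> = (-1) ^ j * genS c d n j * fact j"
    by (simp add: genS_def)
  finally show ?thesis .
qed

lemma coef_lah:
  assumes jn: "j \<le> n"
  shows "fact n * fps_nth (one_minus_pow 0 * (1 - one_minus_pow (-1)) ^ j) n = (-1) ^ j * Lah n j * fact j"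
proof -
  let ?Q = "one_minus_pow (-1)"
  have omp1: "one_minus_pow 1 = 1 - fps_X"
    by (simp add: one_minus_pow_def fps_binomial_1 fps_compose_add_distrib)
  have "one_minus_pow 1 * ?Q = 1"
    using omp_add[of 1 "-1"] by (simp add: omp_zero)
  hence "(1 - fps_X) * ?Q = 1" by (simp add: omp1)
  hence q: "1 - ?Q = - fps_X * ?Q" by (simp add: algebra_simps)
  have "(1 - ?Q) ^ j = (fps_const (-1) * (fps_X * ?Q)) ^ j"
  proof -
    have "- fps_X * ?Q = fps_const (-1) * (fps_X * ?Q)" by (simp add: fps_eq_iff)
    thus ?thesis unfolding q by simp
  qed
  also have "\<dots> = fps_const (-1) ^ j * (fps_X ^ j * ?Q ^ j)"
    by (simp only: power_mult_distrib)
  also have "\<dots> = fps_const ((-1) ^ j) * (fps_X ^ j * one_minus_pow (- real j))"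
    by (simp only: fps_const_power omp_power) simp
  finally have e: "one_minus_pow 0 * (1 - ?Q) ^ j = fps_const ((-1) ^ j) * (fps_X ^ j * one_minus_pow (- real j))"
    by (simp add: omp_zero)
  have lhs: "fact n * fps_nth (one_minus_pow 0 * (1 - ?Q) ^ j) n
      = (-1) ^ j * (fact n * pochhammer (real j) (n - j) / fact (n - j))"
    unfolding e using jn by (simp add: fps_X_power_mult_nth omp_nth)
  show ?thesis
  proof (cases "j = 0")
    case True
    thus ?thesis unfolding lhs by (simp add: Lah_def pochhammer_0_left)
  next
    case False
    hence j1: "1 \<le> j" by simp
    have "fact (n - 1) = (pochhammer 1 ((j - 1) + (n - j)) :: real)"
      using j1 jn by (simp add: pochhammer_fact)
    also have "\<dots> = pochhammer 1 (j - 1) * pochhammer (1 + of_nat (j - 1)) (n - j)"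
      by (rule pochhammer_product')
    also have "\<dots> = fact (j - 1) * pochhammer (real j) (n - j)"
      using j1 by (simp add: pochhammer_fact of_nat_diff)
    finally have p: "pochhammer (real j) (n - j) = fact (n - 1) / fact (j - 1)"
      by (simp add: field_simps)
    have c: "real ((n - 1) choose (j - 1)) = fact (n - 1) / (fact (j - 1) * fact (n - j))"
    proof -
      have le: "j - 1 \<le> n - 1" using jn by simp
      have "n - 1 - (j - 1) = n - j" using j1 jn by simp
      thus ?thesis using binomial_fact[OF le, where 'a=real] by simp
    qed
    have L: "Lah n j = real ((n - 1) choose (j - 1)) * fact n / fact j"
      using j1 jn by (simp add: Lah_def)
    show ?thesis unfolding lhs L c p by (simp add: field_simps)
  qed
qed

theorem proposition5:
  fixes a b a' b' x :: real and n :: nat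
  assumes "b \<noteq> 0" and "b' \<noteq> 0"
  shows "Ppoly n a b x =
           (\<Sum>j = 0..n. (-1) ^ j * genS (a - (a' / b') * b) (b / b') n j * Ppoly j a' b' x)
       \<and> Ppoly n a b x = (\<Sum>j = 0..n. (-1) ^ j * Lah n j * Ppoly j (- a) (- b) x)"
proof -
  have gen: "Ppoly n a b x = (\<Sum>j = 0..n. (-1) ^ j * genS (a - (a'' / b'') * b) (b / b'') n j * Ppoly j a'' b'' x)"
    if nz: "b'' \<noteq> 0" for a'' b''
  proof -
    let ?c = "a - (a'' / b'') * b" and ?d = "b / b''"
    have s0: "fps_nth (1 - one_minus_pow ?d) 0 = 0" by (simp add: omp_0_nth)
    have "Ppoly n a b x = fact n * fps_nth (one_minus_pow ?c * (Pgen a'' b'' x oo (1 - one_minus_pow ?d))) n"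
      unfolding Ppoly_def using Pgen_comp[OF nz, of a b x a''] by simp
    also have "\<dots> = (\<Sum>j=0..n. fps_nth (Pgen a'' b'' x) j * (fact n * fps_nth (one_minus_pow ?c * (1 - one_minus_pow ?d) ^ j) n))"
      unfolding coeff_comp[OF s0] sum_distrib_left by (simp add: mult_ac)
    also have "\<dots> = (\<Sum>j = 0..n. (-1) ^ j * genS ?c ?d n j * Ppoly j a'' b'' x)"
      unfolding coef_genS Ppoly_def by (simp add: mult_ac)
    finally show ?thesis .
  qed
  have lah: "genS 0 (-1) n j = Lah n j" if "j \<le> n" for j
  proof -
    have "(-1) ^ j * genS 0 (-1) n j * fact j = (-1) ^ j * Lah n j * fact j"
      using coef_genS[of n 0 "-1" j] coef_lah[OF that] by simp
    thus ?thesis by simp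
  qed
  have "Ppoly n a b x = (\<Sum>j = 0..n. (-1) ^ j * genS (a - (- a / - b) * b) (b / - b) n j * Ppoly j (- a) (- b) x)"
    using gen[of "- b" "- a"] assms by simp
  also have "\<dots> = (\<Sum>j = 0..n. (-1) ^ j * Lah n j * Ppoly j (- a) (- b) x)"
  proof (rule sum.cong[OF refl])
    fix j assume "j \<in> {0..n}"
    moreover have "a - (- a / - b) * b = 0" "b / - b = -1" using assms by auto
    ultimately show "(-1) ^ j * genS (a - (- a / - b) * b) (b / - b) n j * Ppoly j (- a) (- b) x
        = (-1) ^ j * Lah n j * Ppoly j (- a) (- b) x" using lah by simp
  qed
  finally show ?thesis using gen[OF assms(2)] by simp
qed

end
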